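(* Let $n\ge1$, $m\ge0$ be integers and let non-negative integers $r_0,\dots,r_n$ satisfy $r_n=0$, $r_{n-1}=m$, $r_\ell\ge 2r_{\ell+1}$ for $\ell=n-2,\dots,0$, and let $k\ge 2r_0+1$. Let $T$ be an $n$-simplex. Then for $\ell=1,\dots,n-1$ and every $f\in\Delta_\ell(T)$, $$D(f,r_\ell)\setminus\Big[\bigcup_{i=0}^{\ell-1}\bigcup_{e\in\Delta_i(f)}D(e,r_i)\Big]=D(f,r_\ell)\setminus\Big[\bigcup_{i=0}^{\ell-1}\bigcup_{e\in\Delta_i(T)}D(e,r_i)\Big].$$
   Context: $\mathbb N$ includes $0$; $\mathbb T^n_k=\{\alpha\in\mathbb N^{n+1}:\sum_i\alpha_i=k\}$. $\Delta_i(T)$ (resp. $\Delta_i(f)$) is the set of $i$-dimensional faces of $T$ (resp. of $f$); a face $e$ is identified with its vertex index set $e\subseteq\{0,\dots,n\}$ and $e^*=\{0,\dots,n\}\setminus e$. $D(e,r)=\{\alpha\in\mathbb T^n_k:\sum_{i\in e^*}\alpha_i\le r\}$. *)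

theory Defs
  imports Main
begin

(* Multi-indices alpha in N^{n+1} are represented as functions nat => nat
   vanishing outside {0..n}.  T^n_k = { alpha : sum alpha_i = k }. *)
definition lattice :: "nat \<Rightarrow> nat \<Rightarrow> (nat \<Rightarrow> nat) set" where
  "lattice n k = {\<alpha>. (\<forall>i>n. \<alpha> i = 0) \<and> (\<Sum>i\<le>n. \<alpha> i) = k}"

definition co_face :: "nat \<Rightarrow> nat set \<Rightarrow> nat set" where
  "co_face n e = {..n} - e"

definition Dset :: "nat \<Rightarrow> nat \<Rightarrow> nat set \<Rightarrow> nat \<Rightarrow> (nat \<Rightarrow> nat) set" where
  "Dset n k e r = {\<alpha> \<in> lattice n k. (\<Sum>i\<in>co_face n e. \<alpha> i) \<le> r}"

(* Delta_i(T): i-dimensional faces of the n-simplex T, identified with their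
   vertex index sets (subsets of {0..n} with i+1 elements) *)
definition faces_T :: "nat \<Rightarrow> nat \<Rightarrow> nat set set" where
  "faces_T n i = {e. e \<subseteq> {..n} \<and> card e = i + 1}"

definition faces_of :: "nat set \<Rightarrow> nat \<Rightarrow> nat set set" where
  "faces_of f i = {e. e \<subseteq> f \<and> card e = i + 1}"

end

theory Submission
  imports Defs
begin

lemma sum_co_face_inter:
  fixes \<alpha> :: "nat \<Rightarrow> nat"
  shows "(\<Sum>i\<in>co_face n (e \<inter> f). \<alpha> i) \<le> (\<Sum>i\<in>co_face n e. \<alpha> i) + (\<Sum>i\<in>co_face n f. \<alpha> i)"
proof -
  have u: "co_face n (e \<inter> f) = co_face n e \<union> co_face n f" by (auto simp: co_face_def)
  have "(\<Sum>i\<in>co_face n e \<union> co_face n f. \<alpha> i) + (\<Sum>i\<in>co_face n e \<inter> co_face n f. \<alpha> i)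
        = (\<Sum>i\<in>co_face n e. \<alpha> i) + (\<Sum>i\<in>co_face n f. \<alpha> i)"
    by (rule sum.union_inter) (auto simp: co_face_def)
  thus ?thesis using u by simp
qed

theorem mainTheorem6:
  fixes n m k :: nat and r :: "nat \<Rightarrow> nat"
  assumes "n \<ge> 1"
    and "r n = 0" and "r (n - 1) = m"
    and "\<forall>l. l \<le> n - 2 \<longrightarrow> n \<ge> 2 \<longrightarrow> r l \<ge> 2 * r (l + 1)"
    and "k \<ge> 2 * r 0 + 1"
  shows "\<forall>l\<in>{1..n-1}. \<forall>f\<in>faces_T n l.
     Dset n k f (r l) - (\<Union>i<l. \<Union>e\<in>faces_of f i. Dset n k e (r i))
   = Dset n k f (r l) - (\<Union>i<l. \<Union>e\<in>faces_T n i. Dset n k e (r i))"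
proof (intro ballI)
  fix l f assume l: "l \<in> {1..n-1}" and f: "f \<in> faces_T n l"
  have n2: "n \<ge> 2" using l by auto
  have step: "\<And>a. a \<le> n - 2 \<Longrightarrow> r a \<ge> 2 * r (a + 1)" using assms(4) n2 by auto
  have mono: "\<And>a b. a \<le> b \<Longrightarrow> b \<le> n - 1 \<Longrightarrow> r b \<le> r a"
  proof -
    fix a b :: nat assume ab: "a \<le> b" and bn: "b \<le> n - 1"
    show "r b \<le> r a" using ab bn
    proof (induction b rule: dec_induct)
      case base then show ?case by simp
    next
      case (step b)
      have "r (b+1) \<le> 2 * r (b + 1)" by simp
      also have "\<dots> \<le> r b" using \<open>Suc b \<le> n - 1\<close> step.prems assms(4) n2 by auto
      finally show ?case using step by simp
    qed
  qed
  have fsub: "f \<subseteq> {..n}" and fcard: "card f = l + 1" using f by (auto simp: faces_T_def)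
  have sub1: "\<And>i. faces_of f i \<subseteq> faces_T n i" using fsub by (auto simp: faces_of_def faces_T_def)
  have key: "\<alpha> \<in> (\<Union>i<l. \<Union>e\<in>faces_of f i. Dset n k e (r i))"
    if a1: "\<alpha> \<in> Dset n k f (r l)" and i: "i < l" and e: "e \<in> faces_T n i" and a2: "\<alpha> \<in> Dset n k e (r i)" for \<alpha> i e
  proof -
    have esub: "e \<subseteq> {..n}" and ecard: "card e = i + 1" using e by (auto simp: faces_T_def)
    have lat: "\<alpha> \<in> lattice n k" and sf: "(\<Sum>j\<in>co_face n f. \<alpha> j) \<le> r l"
      using a1 by (auto simp: Dset_def)
    have se: "(\<Sum>j\<in>co_face n e. \<alpha> j) \<le> r i" using a2 by (auto simp: Dset_def)
    have sint: "(\<Sum>j\<in>co_face n (e \<inter> f). \<alpha> j) \<le> r i + r l"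
      using sum_co_face_inter[of \<alpha> n e f] sf se by simp
    have ril: "r l \<le> r i" using mono[of i l] i l by auto
    show ?thesis
    proof (cases "e \<subseteq> f")
      case True
      then have "e \<in> faces_of f i" using ecard by (auto simp: faces_of_def)
      then have "\<alpha> \<in> (\<Union>e\<in>faces_of f i. Dset n k e (r i))" using a2 by (rule UN_I)
      moreover have "i \<in> {..<l}" using i by simp
      ultimately show ?thesis by (rule UN_I[rotated])
    next
      case False
      have fin: "finite e" using esub finite_subset by blast
      have lt: "card (e \<inter> f) < card e"
      proof (rule psubset_card_mono[OF fin])
        show "e \<inter> f \<subset> e" using False by blast
      qed
      show ?thesis
      proof (cases "e \<inter> f = {}")
        case True
        have "co_face n (e \<inter> f) = {..n}" using True by (auto simp: co_face_def)
        then have "k \<le> r i + r l" using sint lat by (auto simp: lattice_def)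
        moreover have "r i \<le> r 0" "r l \<le> r 0" using mono[of 0 i] mono[of 0 l] i l by auto
        ultimately show ?thesis using assms(5) by simp
      next
        case False
        have finI: "finite (e \<inter> f)" using fin by simp
        then have cpos: "card (e \<inter> f) \<ge> 1" using False by (simp add: Suc_le_eq card_gt_0_iff)
        define j where "j = card (e \<inter> f) - 1"
        have jc: "card (e \<inter> f) = j + 1" using cpos j_def by simp
        have ji: "j < i" using lt ecard jc by simp
        have "r (j + 1) \<ge> r i" using mono[of "j+1" i] ji i l by auto
        moreover have "r j \<ge> 2 * r (j + 1)" using step[of j] ji i l by auto
        ultimately have "r j \<ge> r i + r l" using ril by simp
        then have "\<alpha> \<in> Dset n k (e \<inter> f) (r j)" using sint lat by (simp add: Dset_def)
        moreover have "e \<inter> f \<in> faces_of f j" using jc by (auto simp: faces_of_def)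
        ultimately have "\<alpha> \<in> (\<Union>e\<in>faces_of f j. Dset n k e (r j))" by (rule UN_I[rotated])
        moreover have "j \<in> {..<l}" using ji i by simp
        ultimately show ?thesis by (rule UN_I[rotated])
      qed
    qed
  qed
  show "Dset n k f (r l) - (\<Union>i<l. \<Union>e\<in>faces_of f i. Dset n k e (r i))
   = Dset n k f (r l) - (\<Union>i<l. \<Union>e\<in>faces_T n i. Dset n k e (r i))"
  proof
    show "Dset n k f (r l) - (\<Union>i<l. \<Union>e\<in>faces_T n i. Dset n k e (r i))
      \<subseteq> Dset n k f (r l) - (\<Union>i<l. \<Union>e\<in>faces_of f i. Dset n k e (r i))"
      using sub1 by blast
    show "Dset n k f (r l) - (\<Union>i<l. \<Union>e\<in>faces_of f i. Dset n k e (r i))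
      \<subseteq> Dset n k f (r l) - (\<Union>i<l. \<Union>e\<in>faces_T n i. Dset n k e (r i))"
    proof
      fix x assume x: "x \<in> Dset n k f (r l) - (\<Union>i<l. \<Union>e\<in>faces_of f i. Dset n k e (r i))"
      show "x \<in> Dset n k f (r l) - (\<Union>i<l. \<Union>e\<in>faces_T n i. Dset n k e (r i))"
      proof (rule DiffI)
        show "x \<in> Dset n k f (r l)" using x by simp
        show "x \<notin> (\<Union>i<l. \<Union>e\<in>faces_T n i. Dset n k e (r i))"
        proof
          assume "x \<in> (\<Union>i<l. \<Union>e\<in>faces_T n i. Dset n k e (r i))"
          then obtain i e where "i < l" "e \<in> faces_T n i" "x \<in> Dset n k e (r i)" by blast
          then have "x \<in> (\<Union>i<l. \<Union>e\<in>faces_of f i. Dset n k e (r i))"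
            using key[of x i e] x by simp
          then show False using x by simp
        qed
      qed
    qed
  qed
qed

end
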